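(* In the changepoint model of the context, for $0<i\le n$, $$\big(X_i\mid Y_{1:n}=y_{1:n}\big)\sim\sum_{j=0}^i\Big(H_{jn}\,\tilde c_{jn}+\sum_{\ell=i}^{n-1}H_{j\ell}\,\tilde c_{j\ell}\,\tilde q_{\ell+1}\Big).$$
   Context: Model: Let $n\ge 1$ and fix observed data $y_1,\dots,y_n$. Let $(\mathbb X,\mathcal X)$, $(\mathbb Y,\mathcal Y)$ be standard Borel spaces, $\psi$ a $\sigma$-finite measure on $(\mathbb Y,\mathcal Y)$, $\mathcal J$ a probability measure on $(\mathbb X,\mathcal X)$, and $q_{ji}\in[0,1]$ for $0\le j<i\le n$. The model consists of random variables $C_i\in\{0,\dots,i\}$, $X_i\in\mathbb X$, $Y_i\in\mathbb Y$, $i=1,\dots,n$, with joint law factorizing as: $P(C_1=0)=q_{01}$, $P(C_1=1)=1-q_{01}$; for $i\ge2$, $C_i$ depends on the past only through $C_{i-1}$, with $P(C_i=j\mid C_{i-1}=j)=q_{ji}$ and $P(C_i=i\mid C_{i-1}=j)=1-q_{ji}$ ($0\le j\le i-1$); $X_1\sim\mathcal J$ independent of $C_1$; for $i\ge 2$, $X_i$ depends on the past only through $(C_i,X_{i-1})$, with $X_i\sim\mathcal J$ if $C_i=i$ and $X_i=X_{i-1}$ if $C_i<i$; $Y_i$ depends on all other variables only through $X_i$, with density $p(Y_i=y\mid X_i=x)$ w.r.t. $\psi$. Assume $\int\prod_{\ell=j}^i p(Y_\ell=y_\ell\mid X_\ell=x)\,\mathcal J(dx)>0$ for all $0<j\le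 i\le n$. $Y_{a:b}=y_{a:b}$ abbreviates $Y_a=y_a,\dots,Y_b=y_b$. Notation: $H_{ji}=P(X_i\in\cdot\mid C_i=j,Y_{1:i}=y_{1:i})$; $\tilde c_{ji}=P(C_i=j\mid C_{i+1}=i+1,Y_{1:i}=y_{1:i})$ for $0<i<n$, and $\tilde c_{jn}=P(C_n=j\mid Y_{1:n}=y_{1:n})$; $\tilde q_i=P(C_i=i\mid Y_{1:n}=y_{1:n})$. *)

theory Defs
  imports "HOL-Probability.Probability"
begin

text \<open>A realisation is a pair (c, z): c is the changepoint path
  (c i = C_i for 1 \<le> i \<le> n, c 0 = 0 and c k = 0 for k > n), z k (1 \<le> k \<le> n) are i.i.d.
  draws from J, independent of the path; X_i = z (max 1 (C_i)), i.e. the fresh draw made at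
  the last changepoint (or at time 1 if there was none).\<close>

definition cpaths :: "nat \<Rightarrow> (nat \<Rightarrow> nat) set" where
  "cpaths n = {c. \<forall>k. (k \<in> {1..n} \<longrightarrow> c k \<le> k) \<and> (k \<notin> {1..n} \<longrightarrow> c k = 0)}"

text \<open>Probability of a path: P(C_1 = 0) = q 0 1, P(C_1 = 1) = 1 - q 0 1 (using c 0 = 0), and
  P(C_i = j | C_{i-1} = j) = q j i, P(C_i = i | C_{i-1} = j) = 1 - q j i.\<close>
definition path_weight :: "(nat \<Rightarrow> nat \<Rightarrow> real) \<Rightarrow> nat \<Rightarrow> (nat \<Rightarrow> nat) \<Rightarrow> real" where
  "path_weight q n c = (\<Prod>i\<in>{1..n}.
      (if c i = c (i - 1) then q (c (i - 1)) i
       else if c i = i then 1 - q (c (i - 1)) i else 0))"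

definition cp_joint :: "nat \<Rightarrow> (nat \<Rightarrow> nat \<Rightarrow> real) \<Rightarrow> 'x measure
      \<Rightarrow> ((nat \<Rightarrow> nat) \<times> (nat \<Rightarrow> 'x)) measure" where
  "cp_joint n q J = density (count_space (cpaths n)) (\<lambda>c. ennreal (path_weight q n c))
                      \<Otimes>\<^sub>M PiM {1..n} (\<lambda>_. J)"

definition Cv :: "nat \<Rightarrow> (nat \<Rightarrow> nat) \<times> (nat \<Rightarrow> 'x) \<Rightarrow> nat" where
  "Cv i \<omega> = fst \<omega> i"

definition Xv :: "nat \<Rightarrow> (nat \<Rightarrow> nat) \<times> (nat \<Rightarrow> 'x) \<Rightarrow> 'x" where
  "Xv i \<omega> = snd \<omega> (max 1 (fst \<omega> i))"

definition lik :: "('x \<Rightarrow> 'y \<Rightarrow> real) \<Rightarrow> (nat \<Rightarrow> 'y) \<Rightarrow> nat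
      \<Rightarrow> (nat \<Rightarrow> nat) \<times> (nat \<Rightarrow> 'x) \<Rightarrow> real" where
  "lik p y m \<omega> = (\<Prod>l\<in>{1..m}. p (Xv l \<omega>) (y l))"

text \<open>P(E | F, Y_{1:m} = y_{1:m}) by Bayes' formula (x / 0 = 0 convention).\<close>
definition post :: "nat \<Rightarrow> (nat \<Rightarrow> nat \<Rightarrow> real) \<Rightarrow> 'x measure \<Rightarrow> ('x \<Rightarrow> 'y \<Rightarrow> real)
      \<Rightarrow> (nat \<Rightarrow> 'y) \<Rightarrow> nat \<Rightarrow> ((nat \<Rightarrow> nat) \<times> (nat \<Rightarrow> 'x)) set
      \<Rightarrow> ((nat \<Rightarrow> nat) \<times> (nat \<Rightarrow> 'x)) set \<Rightarrow> real" where
  "post n q J p y m F E =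
     (\<integral>\<omega>. indicator (E \<inter> F) \<omega> * lik p y m \<omega> \<partial>cp_joint n q J) /
     (\<integral>\<omega>. indicator F \<omega> * lik p y m \<omega> \<partial>cp_joint n q J)"

definition Hc :: "nat \<Rightarrow> (nat \<Rightarrow> nat \<Rightarrow> real) \<Rightarrow> 'x measure \<Rightarrow> ('x \<Rightarrow> 'y \<Rightarrow> real)
      \<Rightarrow> (nat \<Rightarrow> 'y) \<Rightarrow> nat \<Rightarrow> nat \<Rightarrow> 'x set \<Rightarrow> real" where
  "Hc n q J p y j i A = post n q J p y i {\<omega>. Cv i \<omega> = j} {\<omega>. Xv i \<omega> \<in> A}"

definition ct :: "nat \<Rightarrow> (nat \<Rightarrow> nat \<Rightarrow> real) \<Rightarrow> 'x measure \<Rightarrow> ('x \<Rightarrow> 'y \<Rightarrow> real)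
      \<Rightarrow> (nat \<Rightarrow> 'y) \<Rightarrow> nat \<Rightarrow> nat \<Rightarrow> real" where
  "ct n q J p y j i =
     (if i < n then post n q J p y i {\<omega>. Cv (i + 1) \<omega> = i + 1} {\<omega>. Cv i \<omega> = j}
      else post n q J p y n UNIV {\<omega>. Cv n \<omega> = j})"

definition qt :: "nat \<Rightarrow> (nat \<Rightarrow> nat \<Rightarrow> real) \<Rightarrow> 'x measure \<Rightarrow> ('x \<Rightarrow> 'y \<Rightarrow> real)
      \<Rightarrow> (nat \<Rightarrow> 'y) \<Rightarrow> nat \<Rightarrow> real" where
  "qt n q J p y i = post n q J p y n UNIV {\<omega>. Cv i \<omega> = i}"

end

theory Submission
  imports Defs
begin

definition tr :: "(nat \<Rightarrow> nat \<Rightarrow> real) \<Rightarrow> nat \<Rightarrow> nat \<Rightarrow> nat \<Rightarrow> real" where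
  "tr q i u v = (if v = u then q u i else if v = i then 1 - q u i else 0)"

lemma path_weight_tr: "path_weight q m c = (\<Prod>i\<in>{1..m}. tr q i (c (i - 1)) (c i))"
  unfolding path_weight_def tr_def by (intro prod.cong) auto

locale cpm =
  fixes n :: nat and q :: "nat \<Rightarrow> nat \<Rightarrow> real" and J :: "'x::topological_space measure"
    and p :: "'x \<Rightarrow> 'y::topological_space \<Rightarrow> real" and y :: "nat \<Rightarrow> 'y"
  assumes n1: "n \<ge> 1" and J: "prob_space J" and sJ: "sets J = sets borel"
    and qb: "\<And>j k. j < k \<Longrightarrow> k \<le> n \<Longrightarrow> 0 \<le> q j k \<and> q j k \<le> 1"
    and pm: "(\<lambda>(x, v). p x v) \<in> borel_measurable (borel \<Otimes>\<^sub>M borel)"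
    and p0: "\<And>x v. 0 \<le> p x v"
begin

abbreviation PM where "PM \<equiv> PiM {1..n} (\<lambda>_. J)"

lemma pmeas: "(\<lambda>x. p x v) \<in> borel_measurable J"
proof -
  have "(\<lambda>x. (\<lambda>(x, v). p x v) (x, v)) \<in> borel_measurable borel"
    by (rule measurable_compose[OF _ pm]) auto
  moreover have "(borel_measurable J :: ('x \<Rightarrow> real) set) = borel_measurable borel" by (rule measurable_cong_sets[OF sJ refl])
  ultimately show ?thesis by simp
qed

lemma cpaths_finite: "finite (cpaths m)"
proof -
  have "cpaths m \<subseteq> {f. \<forall>x. (x \<in> {1..m} \<longrightarrow> f x \<in> {0..m}) \<and> (x \<notin> {1..m} \<longrightarrow> f x = 0)}"
    unfolding cpaths_def by (auto intro: order.trans)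
  then show ?thesis by (rule finite_subset) (intro finite_set_of_finite_funs; simp)
qed

lemma cpaths_idx: "c \<in> cpaths n \<Longrightarrow> max 1 (c k) \<in> {1..n}"
proof (cases "k \<in> {1..n}")
  case True
  assume c: "c \<in> cpaths n"
  then have "c k \<le> n" using True unfolding cpaths_def by (auto intro: order.trans)
  then show ?thesis using n1 by simp
next
  case False
  assume c: "c \<in> cpaths n"
  then have "c k = 0" using False unfolding cpaths_def by auto
  then show ?thesis using n1 by simp
qed

lemma lik_nonneg: "0 \<le> lik p y m \<omega>"
  unfolding lik_def by (intro prod_nonneg) (auto intro: p0)

lemma meas_z:
  assumes c: "c \<in> cpaths n" and B: "B \<in> sets borel"
  shows "(\<lambda>z. indicator B (z (max 1 (c k))) * lik p y m (c, z)) \<in> borel_measurable PM"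
proof -
  have comp: "(\<lambda>z. z (max 1 (c l))) \<in> measurable PM J" for l
    using cpaths_idx[OF c] by (intro measurable_component_singleton) auto
  have "(\<lambda>z. indicator B (z (max 1 (c k))) :: real) \<in> borel_measurable PM"
    using measurable_compose[OF comp[of k], of "indicator B"] B sJ
    by (metis borel_measurable_indicator measurable_cong_sets)
  moreover have "(\<lambda>z. lik p y m (c, z)) \<in> borel_measurable PM"
    unfolding lik_def Xv_def
    unfolding fst_conv snd_conv
    by (intro borel_measurable_prod measurable_compose[OF comp pmeas])
  ultimately show ?thesis by measurable
qed

definition W :: "nat \<Rightarrow> (nat \<Rightarrow> nat) \<Rightarrow> ennreal" where
  "W m c = ennreal (path_weight q m c)"

definition V :: "nat \<Rightarrow> nat \<Rightarrow> 'x set \<Rightarrow> (nat \<Rightarrow> nat) \<Rightarrow> ennreal" where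
  "V m k B c = (\<integral>\<^sup>+ z. ennreal (indicator B (z (max 1 (c k))) * lik p y m (c, z)) \<partial>PM)"

definition NN :: "nat \<Rightarrow> ((nat \<Rightarrow> nat) \<Rightarrow> bool) \<Rightarrow> nat \<Rightarrow> 'x set \<Rightarrow> ennreal" where
  "NN m P k B = (\<integral>\<^sup>+ \<omega>. ennreal (indicator ({\<omega>. P (fst \<omega>)} \<inter> {\<omega>. Xv k \<omega> \<in> B}) \<omega> * lik p y m \<omega>)
      \<partial>cp_joint n q J)"

lemma PM_prob: "prob_space PM"
  by (intro prob_space_PiM J)

lemma fst_meas: "fst \<in> measurable (cp_joint n q J) (count_space (cpaths n))"
proof -
  have "fst \<in> measurable (cp_joint n q J) (density (count_space (cpaths n)) (\<lambda>c. ennreal (path_weight q n c)))"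
    unfolding cp_joint_def by (rule measurable_fst)
  then show ?thesis by (simp add: measurable_cong_sets[OF refl sets_density])
qed

lemma meas_joint:
  assumes "\<And>c. c \<in> cpaths n \<Longrightarrow> h c \<in> borel_measurable PM"
  shows "(\<lambda>\<omega>. h (fst \<omega>) (snd \<omega>)) \<in> borel_measurable (cp_joint n q J)"
proof (rule measurable_compose_countable'[OF _ fst_meas])
  fix c assume "c \<in> cpaths n"
  then show "(\<lambda>\<omega>. h c (snd \<omega>)) \<in> borel_measurable (cp_joint n q J)"
    unfolding cp_joint_def by (intro measurable_compose[OF measurable_snd assms])
qed (simp add: countable_finite cpaths_finite)

lemma integrand_eq:
  "indicator ({\<omega>. P (fst \<omega>)} \<inter> {\<omega>. Xv k \<omega> \<in> B}) \<omega> * lik p y m \<omega> =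
   (if P (fst \<omega>) then indicator B (snd \<omega> (max 1 (fst \<omega> k))) * lik p y m (fst \<omega>, snd \<omega>) else 0)"
  by (cases \<omega>) (auto simp: Xv_def indicator_def)

lemma meas_integrand:
  assumes B: "B \<in> sets borel"
  shows "(\<lambda>\<omega>. indicator ({\<omega>. P (fst \<omega>)} \<inter> {\<omega>. Xv k \<omega> \<in> B}) \<omega> * lik p y m \<omega>) \<in> borel_measurable (cp_joint n q J)"
  unfolding integrand_eq
proof (rule meas_joint[where h="\<lambda>c z. if P c then indicator B (z (max 1 (c k))) * lik p y m (c, z) else 0"])
  fix c assume c: "c \<in> cpaths n"
  show "(\<lambda>z. if P c then indicator B (z (max 1 (c k))) * lik p y m (c, z) else 0) \<in> borel_measurable PM"
    using meas_z[OF c B, of k m] by (cases "P c") auto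
qed

lemma NN_sum:
  assumes B: "B \<in> sets borel"
  shows "NN m P k B = (\<Sum>c\<in>cpaths n. W n c * (if P c then V m k B c else 0))"
proof -
  interpret PMp: prob_space PM by (rule PM_prob)
  let ?f = "\<lambda>\<omega>. ennreal (indicator ({\<omega>. P (fst \<omega>)} \<inter> {\<omega>. Xv k \<omega> \<in> B}) \<omega> * lik p y m \<omega>)"
  have fm: "?f \<in> borel_measurable (density (count_space (cpaths n)) (\<lambda>c. ennreal (path_weight q n c)) \<Otimes>\<^sub>M PM)"
    using meas_integrand[OF B, of P k m] unfolding cp_joint_def by measurable
  have "NN m P k B = (\<integral>\<^sup>+ c. \<integral>\<^sup>+ z. ?f (c, z) \<partial>PM \<partial>density (count_space (cpaths n)) (\<lambda>c. ennreal (path_weight q n c)))"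
    unfolding NN_def cp_joint_def by (rule PMp.nn_integral_fst[OF fm, symmetric])
  also have "\<dots> = (\<integral>\<^sup>+ c. ennreal (path_weight q n c) * (\<integral>\<^sup>+ z. ?f (c, z) \<partial>PM) \<partial>count_space (cpaths n))"
    by (rule nn_integral_density) auto
  also have "\<dots> = (\<Sum>c\<in>cpaths n. ennreal (path_weight q n c) * (\<integral>\<^sup>+ z. ?f (c, z) \<partial>PM))"
    by (rule nn_integral_count_space_finite[OF cpaths_finite])
  also have "\<dots> = (\<Sum>c\<in>cpaths n. W n c * (if P c then V m k B c else 0))"
    unfolding W_def V_def integrand_eq by (intro sum.cong refl) auto
  finally show ?thesis .
qed

lemma int_NN:
  assumes B: "B \<in> sets borel"
  shows "(\<integral>\<omega>. indicator ({\<omega>. P (fst \<omega>)} \<inter> {\<omega>. Xv k \<omega> \<in> B}) \<omega> * lik p y m \<omega> \<partial>cp_joint n q J) = enn2real (NN m P k B)"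
  unfolding NN_def
  by (rule integral_eq_nn_integral[OF meas_integrand[OF B]]) (auto intro!: AE_I2 mult_nonneg_nonneg lik_nonneg)

definition Gs :: "nat \<Rightarrow> nat \<Rightarrow> 'x set \<Rightarrow> (nat \<Rightarrow> nat) \<Rightarrow> nat \<Rightarrow> ennreal" where
  "Gs m k B c s = (\<integral>\<^sup>+ x. ennreal ((if s = max 1 (c k) then indicator B x else 1) *
        (\<Prod>l\<in>{l\<in>{1..m}. max 1 (c l) = s}. p x (y l))) \<partial>J)"

lemma indB_meas: "B \<in> sets borel \<Longrightarrow> (indicator B :: 'x \<Rightarrow> real) \<in> borel_measurable J"
  using sJ by (metis borel_measurable_indicator measurable_cong_sets)

lemma PF:
  assumes c: "c \<in> cpaths n" and B: "B \<in> sets borel"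
  shows "V m k B c = (\<Prod>s\<in>{1..n}. Gs m k B c s)"
proof -
  interpret PS: product_sigma_finite "\<lambda>_. J"
    unfolding product_sigma_finite_def using J by (simp add: prob_space_imp_sigma_finite)
  define s0 where "s0 = max 1 (c k)"
  have s0: "s0 \<in> {1..n}" unfolding s0_def by (rule cpaths_idx[OF c])
  define g where "g s x = (if s = s0 then indicator B x else 1) *
        (\<Prod>l\<in>{l\<in>{1..m}. max 1 (c l) = s}. p x (y l))" for s x
  have g0: "0 \<le> g s x" for s x unfolding g_def
    by (intro mult_nonneg_nonneg prod_nonneg) (auto intro: p0)
  have pw: "ennreal (indicator B (z (max 1 (c k))) * lik p y m (c, z)) = (\<Prod>s\<in>{1..n}. ennreal (g s (z s)))" for z
  proof -
    have "(\<Prod>s\<in>{1..n}. g s (z s)) = (\<Prod>s\<in>{1..n}. (if s = s0 then indicator B (z s) else 1)) *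
        (\<Prod>s\<in>{1..n}. \<Prod>l\<in>{l\<in>{1..m}. max 1 (c l) = s}. p (z s) (y l))"
      unfolding g_def by (rule prod.distrib)
    also have "(\<Prod>s\<in>{1..n}. (if s = s0 then indicator B (z s) else 1)) = indicator B (z s0)"
      using s0 by (simp add: prod.delta)
    also have "(\<Prod>s\<in>{1..n}. \<Prod>l\<in>{l\<in>{1..m}. max 1 (c l) = s}. p (z s) (y l)) =
        (\<Prod>s\<in>{1..n}. \<Prod>l\<in>{l\<in>{1..m}. max 1 (c l) = s}. p (z (max 1 (c l))) (y l))"
      by (intro prod.cong refl) auto
    also have "\<dots> = (\<Prod>l\<in>{1..m}. p (z (max 1 (c l))) (y l))"
      by (rule prod.group) (use cpaths_idx[OF c] in auto)
    finally have "(\<Prod>s\<in>{1..n}. g s (z s)) = indicator B (z s0) * lik p y m (c, z)"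
      unfolding lik_def Xv_def by simp
    then show ?thesis using g0 by (simp add: prod_ennreal s0_def)
  qed
  have gm: "(\<lambda>x. ennreal (g s x)) \<in> borel_measurable J" for s
    unfolding g_def using indB_meas[OF B] pmeas by measurable
  have "V m k B c = (\<integral>\<^sup>+ z. (\<Prod>s\<in>{1..n}. ennreal (g s (z s))) \<partial>PM)"
    unfolding V_def pw ..
  also have "\<dots> = (\<Prod>s\<in>{1..n}. \<integral>\<^sup>+ x. ennreal (g s x) \<partial>J)"
    by (rule PS.product_nn_integral_prod) (auto intro: gm)
  also have "\<dots> = (\<Prod>s\<in>{1..n}. Gs m k B c s)"
    unfolding Gs_def g_def s0_def ..
  finally show ?thesis .
qed

definition valid :: "(nat \<Rightarrow> nat) \<Rightarrow> bool" where
  "valid c = (\<forall>i\<in>{1..n}. c i = c (i - 1) \<or> c i = i)"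

lemma valid_of_W:
  assumes "W n c \<noteq> 0" shows "valid c"
proof -
  have "path_weight q n c \<noteq> 0" using assms unfolding W_def by auto
  then show ?thesis unfolding path_weight_def valid_def
    by (auto simp: prod_zero_iff split: if_splits)
qed

lemma cp_le: "c \<in> cpaths N \<Longrightarrow> c l \<le> l"
  unfolding cpaths_def by (cases "l \<in> {1..N}") auto

lemma valid_ge:
  assumes v: "valid c" and e: "c (Suc l0) = Suc l0" and "Suc l0 \<le> l" "l \<le> n"
  shows "Suc l0 \<le> c l"
  using assms(3,4)
proof (induction l rule: dec_induct)
  case base then show ?case using e by simp
next
  case (step m)
  then have "c (Suc m) = c m \<or> c (Suc m) = Suc m" using v unfolding valid_def by force
  then show ?case using step by auto
qed

lemma valid_const:
  assumes v: "valid c" and "i \<le> m" "m \<le> n" "c m \<le> i"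
  shows "c m = c i"
  using assms(2-4)
proof (induction m rule: dec_induct)
  case base then show ?case by simp
next
  case (step m)
  then have "c (Suc m) = c m \<or> c (Suc m) = Suc m" using v unfolding valid_def by force
  then show ?case using step by auto
qed

definition drp :: "nat \<Rightarrow> (nat \<Rightarrow> nat) \<Rightarrow> nat \<Rightarrow> nat" where
  "drp l0 c = (\<lambda>k. if k \<le> l0 then 0 else c k)"

definition Tf :: "nat \<Rightarrow> (nat \<Rightarrow> nat) \<Rightarrow> ennreal" where
  "Tf l0 d = (\<Prod>s\<in>{Suc l0..n}. \<integral>\<^sup>+ x. ennreal (\<Prod>l\<in>{l\<in>{1..n}. d l = s}. p x (y l)) \<partial>J)"

lemma F1:
  assumes c: "c \<in> cpaths n" and v: "valid c" and e: "c (Suc l0) = Suc l0" and l0: "Suc l0 \<le> n"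
    and k: "1 \<le> k" "k \<le> l0" and B: "B \<in> sets borel"
  shows "V n k B c = V l0 k B c * Tf l0 (drp l0 c)"
proof -
  interpret Jp: prob_space J by (rule J)
  have split: "{1..n} = {1..l0} \<union> {Suc l0..n}" using l0 by auto
  have disj: "{1..l0} \<inter> {Suc l0..n} = {}" by auto
  have ck: "max 1 (c k) \<le> l0" using cp_le[OF c, of k] k by simp
  have A1: "Gs n k B c s = Gs l0 k B c s" if s: "s \<in> {1..l0}" for s
  proof -
    have "{l\<in>{1..n}. max 1 (c l) = s} = {l\<in>{1..l0}. max 1 (c l) = s}"
    proof (intro equalityI subsetI)
      fix l assume l: "l \<in> {l\<in>{1..n}. max 1 (c l) = s}"
      show "l \<in> {l\<in>{1..l0}. max 1 (c l) = s}"
      proof (rule ccontr)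
        assume "\<not> ?thesis"
        then have "Suc l0 \<le> l" using l by auto
        then have "Suc l0 \<le> c l" using valid_ge[OF v e] l by auto
        then show False using l s by auto
      qed
    qed (use l0 in auto)
    then show ?thesis unfolding Gs_def by simp
  qed
  have A2: "Gs l0 k B c s = 1" if s: "s \<in> {Suc l0..n}" for s
  proof -
    have "max 1 (c l) \<le> l0" if "l \<in> {1..l0}" for l using cp_le[OF c, of l] that by auto
    then have em: "{l\<in>{1..l0}. max 1 (c l) = s} = {}" using s by fastforce
    have ne: "s \<noteq> max 1 (c k)" using ck s by auto
    show ?thesis unfolding Gs_def em if_not_P[OF ne] by (simp add: Jp.emeasure_space_1)
  qed
  have A3: "Gs n k B c s = (\<integral>\<^sup>+ x. ennreal (\<Prod>l\<in>{l\<in>{1..n}. drp l0 c l = s}. p x (y l)) \<partial>J)"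
    if s: "s \<in> {Suc l0..n}" for s
  proof -
    have "max 1 (c l) = s \<longleftrightarrow> drp l0 c l = s" if "l \<in> {1..n}" for l
    proof (cases "l \<le> l0")
      case True
      then have "max 1 (c l) \<le> l0" using cp_le[OF c, of l] that k by auto
      then show ?thesis using True s unfolding drp_def by auto
    next
      case False
      then show ?thesis using s k unfolding drp_def by auto
    qed
    then have "{l\<in>{1..n}. max 1 (c l) = s} = {l\<in>{1..n}. drp l0 c l = s}" by blast
    moreover have "s \<noteq> max 1 (c k)" using ck s by auto
    ultimately show ?thesis unfolding Gs_def by simp
  qed
  have "V n k B c = (\<Prod>s\<in>{1..l0}. Gs n k B c s) * (\<Prod>s\<in>{Suc l0..n}. Gs n k B c s)"
    unfolding PF[OF c B] split by (rule prod.union_disjoint) (auto simp: disj)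
  also have "(\<Prod>s\<in>{Suc l0..n}. Gs n k B c s) = Tf l0 (drp l0 c)"
    unfolding Tf_def by (intro prod.cong refl A3) auto
  also have "(\<Prod>s\<in>{1..l0}. Gs n k B c s) = (\<Prod>s\<in>{1..l0}. Gs l0 k B c s) * (\<Prod>s\<in>{Suc l0..n}. Gs l0 k B c s)"
    using A1 A2 by simp
  also have "\<dots> = V l0 k B c"
    unfolding PF[OF c B] split by (rule prod.union_disjoint[symmetric]) (auto simp: disj)
  finally show ?thesis .
qed

definition trunc :: "nat \<Rightarrow> (nat \<Rightarrow> nat) \<Rightarrow> nat \<Rightarrow> nat" where
  "trunc m c = (\<lambda>k. if k \<le> m then c k else 0)"

lemma tr_nonneg: "u < i \<Longrightarrow> i \<le> n \<Longrightarrow> 0 \<le> tr q i u v"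
  unfolding tr_def using qb[of u i] by auto

lemma cp_out: "c \<in> cpaths N \<Longrightarrow> N < k \<Longrightarrow> c k = 0"
  unfolding cpaths_def by auto

lemma cp_0: "c \<in> cpaths N \<Longrightarrow> c 0 = 0"
  unfolding cpaths_def by auto

lemma pw_nonneg: "c \<in> cpaths m \<Longrightarrow> m \<le> n \<Longrightarrow> 0 \<le> path_weight q m c"
  unfolding path_weight_tr
proof (intro prod_nonneg tr_nonneg)
  fix i assume c: "c \<in> cpaths m" and m: "m \<le> n" and i: "i \<in> {1..m}"
  show "c (i - 1) < i"
  proof (cases "i - 1 = 0")
    case True then show ?thesis using cp_0[OF c] i by simp
  next
    case False then show ?thesis using cp_le[OF c, of "i - 1"] i by simp
  qed
  show "i \<le> n" using i m by simp
qed

lemma trunc_cp: "c \<in> cpaths N \<Longrightarrow> m \<le> N \<Longrightarrow> trunc m c \<in> cpaths m"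
  unfolding cpaths_def trunc_def by auto

lemma trunc_id:
  assumes "c \<in> cpaths m" shows "trunc m c = c"
proof (rule ext)
  fix k show "trunc m c k = c k"
    using cp_out[OF assms, of k] by (cases "k \<le> m") (auto simp: trunc_def)
qed

lemma trunc_app: "k \<le> m \<Longrightarrow> trunc m c k = c k"
  unfolding trunc_def by simp

lemma trunc_trunc: "m \<le> N \<Longrightarrow> trunc m (trunc N c) = trunc m c"
  unfolding trunc_def by auto

lemma pw_Suc:
  assumes a: "a \<in> cpaths m"
  shows "path_weight q (Suc m) (a(Suc m := v)) = path_weight q m a * tr q (Suc m) (a m) v"
proof -
  have "path_weight q (Suc m) (a(Suc m := v)) = tr q (Suc m) (a m) v *
     (\<Prod>i\<in>{1..m}. tr q i ((a(Suc m := v)) (i - 1)) ((a(Suc m := v)) i))"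
    unfolding path_weight_tr by (subst prod.nat_ivl_Suc') simp_all
  also have "(\<Prod>i\<in>{1..m}. tr q i ((a(Suc m := v)) (i - 1)) ((a(Suc m := v)) i)) = path_weight q m a"
    unfolding path_weight_tr
  proof (intro prod.cong refl)
    fix i assume "i \<in> {1..m}"
    then have "i - 1 \<noteq> Suc m" "i \<noteq> Suc m" by auto
    then show "tr q i ((a(Suc m := v)) (i - 1)) ((a(Suc m := v)) i) = tr q i (a (i - 1)) (a i)" by simp
  qed
  finally show ?thesis by (simp only: mult.commute)
qed

lemma upd_trunc:
  assumes a: "a \<in> cpaths m" shows "trunc m (a(Suc m := v)) = a"
proof (rule ext)
  fix k show "trunc m (a(Suc m := v)) k = a k"
    using cp_out[OF a, of k] by (cases "k \<le> m") (auto simp: trunc_def)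
qed

lemma upd_cp:
  assumes a: "a \<in> cpaths m" and v: "v \<le> Suc m" shows "a(Suc m := v) \<in> cpaths (Suc m)"
proof -
  have "(a(Suc m := v)) k \<le> k" if "k \<in> {1..Suc m}" for k
  proof (cases "k = Suc m")
    case True then show ?thesis using v by simp
  next
    case False then show ?thesis using cp_le[OF a, of k] by simp
  qed
  moreover have "(a(Suc m := v)) k = 0" if "k \<notin> {1..Suc m}" for k
  proof -
    have "k \<noteq> Suc m" "k \<notin> {1..m}" using that by auto
    then show ?thesis using a unfolding cpaths_def by simp
  qed
  ultimately show ?thesis unfolding cpaths_def by blast
qed

lemma trunc_upd_id:
  assumes c: "c \<in> cpaths (Suc m)" shows "(trunc m c)(Suc m := c (Suc m)) = c"
proof (rule ext)
  fix k show "((trunc m c)(Suc m := c (Suc m))) k = c k"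
    using cp_out[OF c, of k] by (cases "k \<le> m"; cases "k = Suc m") (auto simp: trunc_def)
qed

lemma W_upd:
  assumes a: "a \<in> cpaths m" and m: "Suc m \<le> n"
  shows "W (Suc m) (a(Suc m := v)) = W m a * ennreal (tr q (Suc m) (a m) v)"
proof -
  have "0 \<le> path_weight q m a" using pw_nonneg[OF a] m by simp
  moreover have "0 \<le> tr q (Suc m) (a m) v" using tr_nonneg[of "a m" "Suc m"] cp_le[OF a, of m] m by simp
  ultimately show ?thesis unfolding W_def pw_Suc[OF a] by (rule ennreal_mult)
qed

lemma GS:
  assumes m: "Suc m \<le> n"
  shows "(\<Sum>c\<in>cpaths (Suc m). W (Suc m) c * H (trunc m c) (c (Suc m))) =
     (\<Sum>a\<in>cpaths m. W m a * (\<Sum>v\<in>{0..Suc m}. ennreal (tr q (Suc m) (a m) v) * H a v))"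
proof -
  have eq1: "(\<Sum>av\<in>cpaths m \<times> {0..Suc m}. W m (fst av) * (ennreal (tr q (Suc m) (fst av m) (snd av)) * H (fst av) (snd av))) =
     (\<Sum>c\<in>cpaths (Suc m). W (Suc m) c * H (trunc m c) (c (Suc m)))"
  proof (rule sum.reindex_bij_witness[where j="\<lambda>av. (fst av)(Suc m := snd av)" and i="\<lambda>c. (trunc m c, c (Suc m))"])
    fix av assume av: "av \<in> cpaths m \<times> {0..Suc m}"
    then have a: "fst av \<in> cpaths m" and v: "snd av \<le> Suc m" by auto
    show "(trunc m ((fst av)(Suc m := snd av)), ((fst av)(Suc m := snd av)) (Suc m)) = av"
      by (simp only: upd_trunc[OF a] fun_upd_same prod.collapse)
    show "(fst av)(Suc m := snd av) \<in> cpaths (Suc m)" by (rule upd_cp[OF a v])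
    show "W (Suc m) ((fst av)(Suc m := snd av)) * H (trunc m ((fst av)(Suc m := snd av))) (((fst av)(Suc m := snd av)) (Suc m)) =
       W m (fst av) * (ennreal (tr q (Suc m) (fst av m) (snd av)) * H (fst av) (snd av))"
      unfolding W_upd[OF a m] upd_trunc[OF a] fun_upd_same by (simp only: mult.assoc)
  next
    fix c assume c: "c \<in> cpaths (Suc m)"
    show "(fst (trunc m c, c (Suc m)))(Suc m := snd (trunc m c, c (Suc m))) = c"
      unfolding fst_conv snd_conv by (rule trunc_upd_id[OF c])
    show "(trunc m c, c (Suc m)) \<in> cpaths m \<times> {0..Suc m}"
    proof (intro SigmaI)
      show "trunc m c \<in> cpaths m" by (rule trunc_cp[OF c]) simp
      show "c (Suc m) \<in> {0..Suc m}" using cp_le[OF c, of "Suc m"] by simp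
    qed
  qed
  have eq2: "(\<Sum>av\<in>cpaths m \<times> {0..Suc m}. W m (fst av) * (ennreal (tr q (Suc m) (fst av m) (snd av)) * H (fst av) (snd av))) =
      (\<Sum>a\<in>cpaths m. \<Sum>v\<in>{0..Suc m}. W m a * (ennreal (tr q (Suc m) (a m) v) * H a v))"
    by (subst sum.cartesian_product) (intro sum.cong refl, simp add: case_prod_beta)
  have eq3: "(\<Sum>a\<in>cpaths m. \<Sum>v\<in>{0..Suc m}. W m a * (ennreal (tr q (Suc m) (a m) v) * H a v)) =
     (\<Sum>a\<in>cpaths m. W m a * (\<Sum>v\<in>{0..Suc m}. ennreal (tr q (Suc m) (a m) v) * H a v))"
    by (simp only: sum_distrib_left)
  show ?thesis using trans[OF trans[OF eq1[symmetric] eq2] eq3] .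
qed

lemma two_term:
  assumes u: "u \<le> m" and m: "Suc m \<le> n"
  shows "(\<Sum>v\<in>{0..Suc m}. ennreal (tr q (Suc m) u v) * h v) =
      ennreal (q u (Suc m)) * h u + ennreal (1 - q u (Suc m)) * h (Suc m)"
proof -
  have "(\<Sum>v\<in>{0..Suc m}. ennreal (tr q (Suc m) u v) * h v) = (\<Sum>v\<in>{u, Suc m}. ennreal (tr q (Suc m) u v) * h v)"
    by (rule sum.mono_neutral_right) (use u in \<open>auto simp: tr_def\<close>)
  also have "\<dots> = ennreal (q u (Suc m)) * h u + ennreal (1 - q u (Suc m)) * h (Suc m)"
    using u by (simp add: tr_def)
  finally show ?thesis .
qed

lemma M:
  assumes "m \<le> N" "N \<le> n"
  shows "(\<Sum>c\<in>cpaths N. W N c * G (trunc m c)) = (\<Sum>a\<in>cpaths m. W m a * G a)"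
  using assms
proof (induction N rule: dec_induct)
  case base
  show ?case by (intro sum.cong refl) (simp add: trunc_id)
next
  case (step N)
  have "(\<Sum>c\<in>cpaths (Suc N). W (Suc N) c * G (trunc m c)) =
        (\<Sum>c\<in>cpaths (Suc N). W (Suc N) c * (\<lambda>a v. G (trunc m a)) (trunc N c) (c (Suc N)))"
    using step by (simp add: trunc_trunc)
  also have "\<dots> = (\<Sum>a\<in>cpaths N. W N a * (\<Sum>v\<in>{0..Suc N}. ennreal (tr q (Suc N) (a N) v) * G (trunc m a)))"
    by (rule GS) (use step in simp)
  also have "\<dots> = (\<Sum>a\<in>cpaths N. W N a * G (trunc m a))"
  proof (intro sum.cong refl)
    fix a assume a: "a \<in> cpaths N"
    have qq: "0 \<le> q (a N) (Suc N) \<and> q (a N) (Suc N) \<le> 1" using qb[of "a N" "Suc N"] cp_le[OF a, of N] step by simp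
    have s1: "(\<Sum>v\<in>{0..Suc N}. ennreal (tr q (Suc N) (a N) v) * G (trunc m a)) =
       (ennreal (q (a N) (Suc N)) + ennreal (1 - q (a N) (Suc N))) * G (trunc m a)"
      using two_term[of "a N" N "\<lambda>_. G (trunc m a)"] cp_le[OF a, of N] step by (simp only: distrib_right)
    have s2: "ennreal (q (a N) (Suc N)) + ennreal (1 - q (a N) (Suc N)) = 1"
      by (subst ennreal_plus[symmetric]) (use qq in auto)
    from s1 s2 show "W N a * (\<Sum>v\<in>{0..Suc N}. ennreal (tr q (Suc N) (a N) v) * G (trunc m a)) = W N a * G (trunc m a)"
      by simp
  qed
  also have "\<dots> = (\<Sum>a\<in>cpaths m. W m a * G a)" using step by simp
  finally show ?case .
qed

lemma Cprime:
  fixes G :: "(nat \<Rightarrow> nat) \<Rightarrow> ennreal"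
  assumes l0: "Suc l0 \<le> n"
  shows "(\<Sum>c\<in>cpaths n. W n c * (if c (Suc l0) = Suc l0 then G (trunc l0 c) else 0)) =
     (\<Sum>a\<in>cpaths l0. W l0 a * (ennreal (1 - q (a l0) (Suc l0)) * G a))"
proof -
  define GG where "GG c = (if c (Suc l0) = Suc l0 then G (trunc l0 c) else 0)" for c
  define HH where "HH a v = (if v = Suc l0 then G a else 0)" for a v
  have e1: "(\<Sum>c\<in>cpaths n. W n c * GG c) = (\<Sum>c\<in>cpaths n. W n c * GG (trunc (Suc l0) c))"
  proof (rule sum.cong[OF refl])
    fix c
    have h1: "trunc l0 (trunc (Suc l0) c) = trunc l0 c" by (rule trunc_trunc) simp
    have h2: "trunc (Suc l0) c (Suc l0) = c (Suc l0)" by (rule trunc_app) simp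
    show "W n c * GG c = W n c * GG (trunc (Suc l0) c)"
      unfolding GG_def by (simp only: h1 h2)
  qed
  have e2: "(\<Sum>c\<in>cpaths n. W n c * GG (trunc (Suc l0) c)) = (\<Sum>c\<in>cpaths (Suc l0). W (Suc l0) c * GG c)"
    by (rule M[of "Suc l0" n GG]) (use l0 in simp_all)
  have e3: "GG c = HH (trunc l0 c) (c (Suc l0))" for c
    unfolding GG_def HH_def by simp
  have e4: "(\<Sum>c\<in>cpaths (Suc l0). W (Suc l0) c * HH (trunc l0 c) (c (Suc l0))) =
     (\<Sum>a\<in>cpaths l0. W l0 a * (\<Sum>v\<in>{0..Suc l0}. ennreal (tr q (Suc l0) (a l0) v) * HH a v))"
    by (rule GS[OF l0])
  have e5: "(\<Sum>v\<in>{0..Suc l0}. ennreal (tr q (Suc l0) (a l0) v) * HH a v) = ennreal (1 - q (a l0) (Suc l0)) * G a"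
    if a: "a \<in> cpaths l0" for a
  proof -
    have ne: "a l0 \<noteq> Suc l0" using cp_le[OF a, of l0] by simp
    have t: "(\<Sum>v\<in>{0..Suc l0}. ennreal (tr q (Suc l0) (a l0) v) * HH a v) =
        ennreal (q (a l0) (Suc l0)) * HH a (a l0) + ennreal (1 - q (a l0) (Suc l0)) * HH a (Suc l0)"
      by (rule two_term) (use cp_le[OF a, of l0] l0 in simp_all)
    show ?thesis unfolding t unfolding HH_def if_not_P[OF ne] if_P[OF refl] by simp
  qed
  show ?thesis
    using e1 e2 e4 e5 unfolding e3[symmetric] GG_def[symmetric] by simp
qed
end


lemma K1:
  fixes x y D :: ennreal
  assumes "x \<le> y" "y \<le> D" "D < top"
  shows "enn2real x / enn2real D = enn2real x / enn2real y * (enn2real y / enn2real D)"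
proof (cases "y = 0")
  case True
  then have "x = 0" using assms(1) by simp
  then show ?thesis by simp
next
  case False
  have "y < top" using assms by (meson le_less_trans)
  then have "enn2real y > 0" using False by (simp add: enn2real_positive_iff less_top[symmetric] zero_less_iff_neq_zero)
  then show ?thesis by (simp add: field_simps)
qed

lemma K2:
  fixes aA aU bj s Y D :: ennreal
  assumes h1: "aA \<le> aU" and h2: "bj \<le> 1" and h3: "bj * aU \<le> s" and h4: "s * Y \<le> D" and h5: "D < top"
  shows "enn2real (bj * aA * Y) / enn2real D =
     enn2real aA / enn2real aU * (enn2real (bj * aU) / enn2real s) * (enn2real (s * Y) / enn2real D)"
proof -
  consider "Y = 0" | "bj = 0" | "aU = 0" | "Y \<noteq> 0" "bj \<noteq> 0" "aU \<noteq> 0" by blast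
  then show ?thesis
  proof cases
    case 1 then show ?thesis by simp
  next
    case 2 then show ?thesis by simp
  next
    case 3 then have "aA = 0" using h1 by simp
    then show ?thesis by simp
  next
    case 4
    have sY: "s * Y < top" using h4 h5 by (meson le_less_trans)
    have s0: "s \<noteq> 0" using h3 4 by (metis le_zero_eq mult_eq_0_iff)
    have sT: "s < top" and YT: "Y < top" using sY s0 4(1) by (auto simp: ennreal_mult_less_top)
    have bu: "bj * aU < top" using h3 sT by (meson le_less_trans)
    have uT: "aU < top" using bu 4 by (auto simp: ennreal_mult_less_top)
    have aT: "aA < top" using h1 uT by (meson le_less_trans)
    have bT: "bj < top" using h2 by (metis ennreal_one_less_top le_less_trans)
    have upos: "enn2real aU > 0" using uT 4(3) by (simp add: enn2real_positive_iff less_top[symmetric] zero_less_iff_neq_zero)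
    have spos: "enn2real s > 0" using sT s0 by (simp add: enn2real_positive_iff less_top[symmetric] zero_less_iff_neq_zero)
    show ?thesis using upos spos by (simp add: enn2real_mult field_simps)
  qed
qed


context cpm begin

definition Sf :: "nat \<Rightarrow> (nat \<Rightarrow> nat) set" where
  "Sf l0 = {d \<in> cpaths n. d (Suc l0) = Suc l0 \<and> (\<forall>k\<le>l0. d k = 0)}"

definition W' :: "nat \<Rightarrow> (nat \<Rightarrow> nat) \<Rightarrow> ennreal" where
  "W' l0 d = ennreal (\<Prod>i\<in>{Suc (Suc l0)..n}. tr q i (d (i - 1)) (d i))"

definition glue :: "nat \<Rightarrow> (nat \<Rightarrow> nat) \<Rightarrow> (nat \<Rightarrow> nat) \<Rightarrow> nat \<Rightarrow> nat" where
  "glue l0 a d = (\<lambda>k. if k \<le> l0 then a k else d k)"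

lemma W_glue:
  assumes a: "a \<in> cpaths l0" and d: "d \<in> Sf l0" and l0: "Suc l0 \<le> n"
  shows "W n (glue l0 a d) = W l0 a * ennreal (1 - q (a l0) (Suc l0)) * W' l0 d"
proof -
  let ?g = "glue l0 a d"
  have dc: "d \<in> cpaths n" and dS: "d (Suc l0) = Suc l0" using d unfolding Sf_def by auto
  have split: "{1..n} = {1..l0} \<union> {Suc l0..n}" using l0 by auto
  have p1: "(\<Prod>i\<in>{1..l0}. tr q i (?g (i - 1)) (?g i)) = path_weight q l0 a"
    unfolding path_weight_tr by (intro prod.cong refl) (auto simp: glue_def)
  have p2: "(\<Prod>i\<in>{Suc l0..n}. tr q i (?g (i - 1)) (?g i)) =
      tr q (Suc l0) (?g l0) (?g (Suc l0)) * (\<Prod>i\<in>{Suc (Suc l0)..n}. tr q i (?g (i - 1)) (?g i))"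
    using l0 by (simp add: prod.atLeast_Suc_atMost)
  have p3: "(\<Prod>i\<in>{Suc (Suc l0)..n}. tr q i (?g (i - 1)) (?g i)) = (\<Prod>i\<in>{Suc (Suc l0)..n}. tr q i (d (i - 1)) (d i))"
    by (intro prod.cong refl) (auto simp: glue_def)
  have ne: "a l0 \<noteq> Suc l0" using cp_le[OF a, of l0] by simp
  have p4: "tr q (Suc l0) (?g l0) (?g (Suc l0)) = 1 - q (a l0) (Suc l0)"
    using ne dS unfolding glue_def tr_def by simp
  have pw: "path_weight q n ?g = path_weight q l0 a * (1 - q (a l0) (Suc l0)) * (\<Prod>i\<in>{Suc (Suc l0)..n}. tr q i (d (i - 1)) (d i))"
  proof -
    have "path_weight q n ?g = (\<Prod>i\<in>{1..l0}. tr q i (?g (i - 1)) (?g i)) * (\<Prod>i\<in>{Suc l0..n}. tr q i (?g (i - 1)) (?g i))"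
      unfolding path_weight_tr[of q n] split by (rule prod.union_disjoint) auto
    then show ?thesis by (simp only: p1 p2 p3 p4 mult.assoc)
  qed
  have n1: "0 \<le> path_weight q l0 a" using pw_nonneg[OF a] l0 by simp
  have n2: "0 \<le> 1 - q (a l0) (Suc l0)" using qb[of "a l0" "Suc l0"] cp_le[OF a, of l0] l0 by simp
  have n3: "0 \<le> (\<Prod>i\<in>{Suc (Suc l0)..n}. tr q i (d (i - 1)) (d i))"
  proof (intro prod_nonneg tr_nonneg)
    fix i assume i: "i \<in> {Suc (Suc l0)..n}"
    show "d (i - 1) < i" using cp_le[OF dc, of "i - 1"] i by auto
    show "i \<le> n" using i by simp
  qed
  show ?thesis unfolding W_def W'_def pw using n1 n2 n3
    by (simp add: ennreal_mult mult_nonneg_nonneg)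
qed

lemma trunc_glue: "a \<in> cpaths l0 \<Longrightarrow> trunc l0 (glue l0 a d) = a"
proof (rule ext)
  fix k assume a: "a \<in> cpaths l0"
  show "trunc l0 (glue l0 a d) k = a k"
    using cp_out[OF a, of k] by (cases "k \<le> l0") (auto simp: trunc_def glue_def)
qed

lemma drp_glue: "d \<in> Sf l0 \<Longrightarrow> drp l0 (glue l0 a d) = d"
proof (rule ext)
  fix k assume d: "d \<in> Sf l0"
  show "drp l0 (glue l0 a d) k = d k"
    using d by (cases "k \<le> l0") (auto simp: drp_def glue_def Sf_def)
qed

lemma glue_trunc_drp: "glue l0 (trunc l0 c) (drp l0 c) = c"
  by (rule ext) (simp add: glue_def trunc_def drp_def)

lemma glue_cp:
  assumes a: "a \<in> cpaths l0" and d: "d \<in> Sf l0" and l0: "l0 \<le> n"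
  shows "glue l0 a d \<in> cpaths n"
proof -
  have dc: "d \<in> cpaths n" using d unfolding Sf_def by auto
  have "glue l0 a d k \<le> k" if "k \<in> {1..n}" for k
    using cp_le[OF a, of k] cp_le[OF dc, of k] by (simp add: glue_def)
  moreover have "glue l0 a d k = 0" if k: "k \<notin> {1..n}" for k
  proof (cases "k \<le> l0")
    case True
    then have "k = 0" using k l0 by auto
    then show ?thesis using cp_0[OF a] True by (simp add: glue_def)
  next
    case False
    then show ?thesis using dc k unfolding cpaths_def glue_def by auto
  qed
  ultimately show ?thesis unfolding cpaths_def by blast
qed

lemma drp_Sf:
  assumes c: "c \<in> cpaths n" and e: "c (Suc l0) = Suc l0"
  shows "drp l0 c \<in> Sf l0"
proof -
  have "drp l0 c k \<le> k" if "k \<in> {1..n}" for k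
    using cp_le[OF c, of k] by (simp add: drp_def)
  moreover have "drp l0 c k = 0" if k: "k \<notin> {1..n}" for k
    using c k unfolding cpaths_def drp_def by auto
  ultimately have "drp l0 c \<in> cpaths n" unfolding cpaths_def by blast
  then show ?thesis using e unfolding Sf_def drp_def by auto
qed

lemma Sf_finite: "finite (Sf l0)"
  unfolding Sf_def using cpaths_finite by simp

lemma Sp:
  fixes G F :: "(nat \<Rightarrow> nat) \<Rightarrow> ennreal"
  assumes l0: "Suc l0 \<le> n"
  shows "(\<Sum>c\<in>cpaths n. W n c * (if c (Suc l0) = Suc l0 then G (trunc l0 c) * F (drp l0 c) else 0)) =
     (\<Sum>a\<in>cpaths l0. W l0 a * (ennreal (1 - q (a l0) (Suc l0)) * G a)) * (\<Sum>d\<in>Sf l0. W' l0 d * F d)"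
proof -
  have e1: "(\<Sum>c\<in>cpaths n. W n c * (if c (Suc l0) = Suc l0 then G (trunc l0 c) * F (drp l0 c) else 0)) =
      (\<Sum>c\<in>{c\<in>cpaths n. c (Suc l0) = Suc l0}. W n c * (G (trunc l0 c) * F (drp l0 c)))"
    unfolding sum.inter_filter[OF cpaths_finite] by (rule sum.cong[OF refl]) simp
  have e2: "(\<Sum>ad\<in>cpaths l0 \<times> Sf l0. (W l0 (fst ad) * ennreal (1 - q (fst ad l0) (Suc l0)) * W' l0 (snd ad)) * (G (fst ad) * F (snd ad))) =
      (\<Sum>c\<in>{c\<in>cpaths n. c (Suc l0) = Suc l0}. W n c * (G (trunc l0 c) * F (drp l0 c)))"
  proof (rule sum.reindex_bij_witness[where j="\<lambda>ad. glue l0 (fst ad) (snd ad)" and i="\<lambda>c. (trunc l0 c, drp l0 c)"])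
    fix ad assume ad: "ad \<in> cpaths l0 \<times> Sf l0"
    then have a: "fst ad \<in> cpaths l0" and d: "snd ad \<in> Sf l0" by auto
    show "(trunc l0 (glue l0 (fst ad) (snd ad)), drp l0 (glue l0 (fst ad) (snd ad))) = ad"
      by (simp only: trunc_glue[OF a] drp_glue[OF d] prod.collapse)
    have "glue l0 (fst ad) (snd ad) (Suc l0) = Suc l0" using d unfolding glue_def Sf_def by simp
    then show "glue l0 (fst ad) (snd ad) \<in> {c\<in>cpaths n. c (Suc l0) = Suc l0}"
      using glue_cp[OF a d] l0 by simp
    show "W n (glue l0 (fst ad) (snd ad)) * (G (trunc l0 (glue l0 (fst ad) (snd ad))) * F (drp l0 (glue l0 (fst ad) (snd ad)))) =
       (W l0 (fst ad) * ennreal (1 - q (fst ad l0) (Suc l0)) * W' l0 (snd ad)) * (G (fst ad) * F (snd ad))"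
      by (simp only: trunc_glue[OF a] drp_glue[OF d] W_glue[OF a d l0])
  next
    fix c assume c: "c \<in> {c\<in>cpaths n. c (Suc l0) = Suc l0}"
    show "glue l0 (fst (trunc l0 c, drp l0 c)) (snd (trunc l0 c, drp l0 c)) = c"
      unfolding fst_conv snd_conv by (rule glue_trunc_drp)
    show "(trunc l0 c, drp l0 c) \<in> cpaths l0 \<times> Sf l0"
    proof (intro SigmaI)
      show "trunc l0 c \<in> cpaths l0" using c l0 by (intro trunc_cp[of c n]) auto
      show "drp l0 c \<in> Sf l0" using c by (intro drp_Sf) auto
    qed
  qed
  have e3: "(\<Sum>ad\<in>cpaths l0 \<times> Sf l0. (W l0 (fst ad) * ennreal (1 - q (fst ad l0) (Suc l0)) * W' l0 (snd ad)) * (G (fst ad) * F (snd ad))) =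
      (\<Sum>a\<in>cpaths l0. \<Sum>d\<in>Sf l0. (W l0 a * (ennreal (1 - q (a l0) (Suc l0)) * G a)) * (W' l0 d * F d))"
    by (subst sum.cartesian_product) (intro sum.cong refl, simp add: case_prod_beta ac_simps)
  have e4: "(\<Sum>a\<in>cpaths l0. \<Sum>d\<in>Sf l0. (W l0 a * (ennreal (1 - q (a l0) (Suc l0)) * G a)) * (W' l0 d * F d)) =
     (\<Sum>a\<in>cpaths l0. W l0 a * (ennreal (1 - q (a l0) (Suc l0)) * G a)) * (\<Sum>d\<in>Sf l0. W' l0 d * F d)"
    by (rule sum_product[symmetric])
  show ?thesis using e1 e2 e3 e4 by simp
qed

lemma V_trunc:
  assumes k: "k \<le> m" shows "V m k B (trunc m c) = V m k B c"
proof -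
  have "ennreal (indicator B (z (max 1 (trunc m c k))) * lik p y m (trunc m c, z)) =
        ennreal (indicator B (z (max 1 (c k))) * lik p y m (c, z))" for z
  proof -
    have "lik p y m (trunc m c, z) = lik p y m (c, z)"
      unfolding lik_def Xv_def fst_conv snd_conv by (intro prod.cong refl) (simp add: trunc_app)
    then show ?thesis using k by (simp add: trunc_app)
  qed
  then show ?thesis unfolding V_def by simp
qed

lemma V_eqk: "c k = c k' \<Longrightarrow> V m k B c = V m k' B c"
  unfolding V_def by simp

lemma V_U_k: "V m k UNIV c = V m k' UNIV c"
  unfolding V_def by simp

lemma NN_k: "NN m P k UNIV = NN m P k' UNIV"
  unfolding NN_def Xv_def by simp

lemma NN_mono_P:
  assumes "\<And>c. P c \<Longrightarrow> P' c" and B: "B \<in> sets borel"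
  shows "NN m P k B \<le> NN m P' k B"
  unfolding NN_sum[OF B] using assms(1) by (intro sum_mono mult_left_mono) auto

lemma V_mono_B: "V m k A c \<le> V m k UNIV c"
  unfolding V_def
  by (intro nn_integral_mono ennreal_leI) (auto simp: indicator_def intro: lik_nonneg)

lemma UNIV_borel: "(UNIV :: 'x set) \<in> sets borel" by simp

lemma NN_mono_B:
  assumes A: "A \<in> sets borel" shows "NN m P k A \<le> NN m P k UNIV"
  unfolding NN_sum[OF A] NN_sum[OF UNIV_borel]
  by (intro sum_mono mult_left_mono) (auto intro: V_mono_B)

lemma lvl_alpha:
  assumes l0: "l0 \<le> n" and B: "B \<in> sets borel"
  shows "NN l0 (\<lambda>c. c l0 = j) l0 B = (\<Sum>a\<in>cpaths l0. W l0 a * (if a l0 = j then V l0 l0 B a else 0))"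
proof -
  define G where "G a = (if a l0 = j then V l0 l0 B a else 0)" for a
  have "NN l0 (\<lambda>c. c l0 = j) l0 B = (\<Sum>c\<in>cpaths n. W n c * G (trunc l0 c))"
    unfolding NN_sum[OF B] G_def by (intro sum.cong refl) (simp add: trunc_app V_trunc)
  also have "\<dots> = (\<Sum>a\<in>cpaths l0. W l0 a * G a)" using M[of l0 n G] l0 by simp
  finally show ?thesis unfolding G_def .
qed

definition Yf :: "nat \<Rightarrow> ennreal" where
  "Yf l0 = (\<Sum>d\<in>Sf l0. W' l0 d * Tf l0 d)"

lemma pull_beta:
  "(\<Sum>a\<in>cpaths l0. W l0 a * (ennreal (1 - q (a l0) (Suc l0)) * (if a l0 = j then X a else 0))) =
   ennreal (1 - q j (Suc l0)) * (\<Sum>a\<in>cpaths l0. W l0 a * (if a l0 = j then X a else 0))"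
proof -
  have "(\<Sum>a\<in>cpaths l0. W l0 a * (ennreal (1 - q (a l0) (Suc l0)) * (if a l0 = j then X a else 0))) =
     (\<Sum>a\<in>cpaths l0. ennreal (1 - q j (Suc l0)) * (W l0 a * (if a l0 = j then X a else 0)))"
    by (intro sum.cong refl) (simp add: ac_simps)
  also have "\<dots> = ennreal (1 - q j (Suc l0)) * (\<Sum>a\<in>cpaths l0. W l0 a * (if a l0 = j then X a else 0))"
    by (rule sum_distrib_left[symmetric])
  finally show ?thesis .
qed

lemma lvl_b:
  assumes l0: "Suc l0 \<le> n"
  shows "NN l0 (\<lambda>c. c l0 = j \<and> c (Suc l0) = Suc l0) l0 UNIV =
     ennreal (1 - q j (Suc l0)) * NN l0 (\<lambda>c. c l0 = j) l0 UNIV"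
proof -
  define G1 where "G1 a = (if a l0 = j then V l0 l0 UNIV a else 0)" for a
  have "NN l0 (\<lambda>c. c l0 = j \<and> c (Suc l0) = Suc l0) l0 UNIV =
      (\<Sum>c\<in>cpaths n. W n c * (if c (Suc l0) = Suc l0 then G1 (trunc l0 c) else 0))"
    unfolding NN_sum[OF UNIV_borel] G1_def by (intro sum.cong refl) (simp add: trunc_app V_trunc)
  also have "\<dots> = (\<Sum>a\<in>cpaths l0. W l0 a * (ennreal (1 - q (a l0) (Suc l0)) * G1 a))"
    by (rule Cprime[OF l0])
  also have "\<dots> = ennreal (1 - q j (Suc l0)) * (\<Sum>a\<in>cpaths l0. W l0 a * G1 a)"
    unfolding G1_def by (rule pull_beta)
  also have "(\<Sum>a\<in>cpaths l0. W l0 a * G1 a) = NN l0 (\<lambda>c. c l0 = j) l0 UNIV"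
    unfolding G1_def using lvl_alpha[OF _ UNIV_borel, of l0 j] l0 by simp
  finally show ?thesis .
qed

lemma lvl_s:
  assumes l0: "Suc l0 \<le> n"
  shows "NN l0 (\<lambda>c. c (Suc l0) = Suc l0) l0 UNIV =
     (\<Sum>a\<in>cpaths l0. W l0 a * (ennreal (1 - q (a l0) (Suc l0)) * V l0 l0 UNIV a))"
proof -
  have "NN l0 (\<lambda>c. c (Suc l0) = Suc l0) l0 UNIV =
      (\<Sum>c\<in>cpaths n. W n c * (if c (Suc l0) = Suc l0 then V l0 l0 UNIV (trunc l0 c) else 0))"
    unfolding NN_sum[OF UNIV_borel] by (intro sum.cong refl) (simp add: V_trunc)
  also have "\<dots> = (\<Sum>a\<in>cpaths l0. W l0 a * (ennreal (1 - q (a l0) (Suc l0)) * V l0 l0 UNIV a))"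
    by (rule Cprime[OF l0])
  finally show ?thesis .
qed

lemma F1':
  assumes c: "c \<in> cpaths n" and W0: "W n c \<noteq> 0" and e: "c (Suc l0) = Suc l0" and l0: "Suc l0 \<le> n"
    and l1: "1 \<le> l0" and B: "B \<in> sets borel"
  shows "V n l0 B c = V l0 l0 B (trunc l0 c) * Tf l0 (drp l0 c)"
  using F1[OF c valid_of_W[OF W0] e l0 l1 order.refl B] by (simp add: V_trunc)

lemma lvl_NC:
  assumes l0: "Suc l0 \<le> n" and l1: "1 \<le> l0"
  shows "NN n (\<lambda>c. c (Suc l0) = Suc l0) n UNIV = NN l0 (\<lambda>c. c (Suc l0) = Suc l0) l0 UNIV * Yf l0"
proof -
  have "NN n (\<lambda>c. c (Suc l0) = Suc l0) n UNIV =
      (\<Sum>c\<in>cpaths n. W n c * (if c (Suc l0) = Suc l0 then V l0 l0 UNIV (trunc l0 c) * Tf l0 (drp l0 c) else 0))"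
    unfolding NN_sum[OF UNIV_borel]
  proof (intro sum.cong refl)
    fix c assume c: "c \<in> cpaths n"
    show "W n c * (if c (Suc l0) = Suc l0 then V n n UNIV c else 0) =
        W n c * (if c (Suc l0) = Suc l0 then V l0 l0 UNIV (trunc l0 c) * Tf l0 (drp l0 c) else 0)"
    proof (cases "W n c = 0 \<or> c (Suc l0) \<noteq> Suc l0")
      case True then show ?thesis by auto
    next
      case False
      then have "V n n UNIV c = V l0 l0 UNIV (trunc l0 c) * Tf l0 (drp l0 c)"
        using F1'[OF c _ _ l0 l1 UNIV_borel] V_U_k[of n n c l0] by simp
      then show ?thesis by simp
    qed
  qed
  also have "\<dots> = (\<Sum>a\<in>cpaths l0. W l0 a * (ennreal (1 - q (a l0) (Suc l0)) * V l0 l0 UNIV a)) * Yf l0"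
    unfolding Yf_def by (rule Sp[OF l0])
  also have "\<dots> = NN l0 (\<lambda>c. c (Suc l0) = Suc l0) l0 UNIV * Yf l0"
    unfolding lvl_s[OF l0] ..
  finally show ?thesis .
qed

lemma lvl_piece:
  assumes l0: "Suc l0 \<le> n" and l1: "1 \<le> l0" and A: "A \<in> sets borel"
  shows "NN n (\<lambda>c. c l0 = j \<and> c (Suc l0) = Suc l0) l0 A =
     ennreal (1 - q j (Suc l0)) * NN l0 (\<lambda>c. c l0 = j) l0 A * Yf l0"
proof -
  define G2 where "G2 a = (if a l0 = j then V l0 l0 A a else 0)" for a
  have "NN n (\<lambda>c. c l0 = j \<and> c (Suc l0) = Suc l0) l0 A =
      (\<Sum>c\<in>cpaths n. W n c * (if c (Suc l0) = Suc l0 then G2 (trunc l0 c) * Tf l0 (drp l0 c) else 0))"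
    unfolding NN_sum[OF A]
  proof (intro sum.cong refl)
    fix c assume c: "c \<in> cpaths n"
    show "W n c * (if c l0 = j \<and> c (Suc l0) = Suc l0 then V n l0 A c else 0) =
        W n c * (if c (Suc l0) = Suc l0 then G2 (trunc l0 c) * Tf l0 (drp l0 c) else 0)"
    proof (cases "W n c = 0 \<or> c (Suc l0) \<noteq> Suc l0")
      case True then show ?thesis by auto
    next
      case False
      then have "V n l0 A c = V l0 l0 A (trunc l0 c) * Tf l0 (drp l0 c)"
        using F1'[OF c _ _ l0 l1 A] by simp
      then show ?thesis unfolding G2_def using False by (simp add: trunc_app)
    qed
  qed
  also have "\<dots> = (\<Sum>a\<in>cpaths l0. W l0 a * (ennreal (1 - q (a l0) (Suc l0)) * G2 a)) * Yf l0"
    unfolding Yf_def by (rule Sp[OF l0])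
  also have "(\<Sum>a\<in>cpaths l0. W l0 a * (ennreal (1 - q (a l0) (Suc l0)) * G2 a)) =
      ennreal (1 - q j (Suc l0)) * NN l0 (\<lambda>c. c l0 = j) l0 A"
    unfolding G2_def pull_beta using lvl_alpha[OF _ A, of l0 j] l0 by simp
  finally show ?thesis .
qed

lemma sum_ind:
  fixes i x :: nat
  shows "(\<Sum>j\<in>{0..i}. if x = j \<and> Q then X else 0) = (if x \<le> i \<and> Q then X else (0::ennreal))"
proof -
  have "(\<Sum>j\<in>{0..i}. if x = j then X else 0) = (if x \<in> {0..i} then X else (0::ennreal))"
    by (rule sum.delta'[OF finite_atLeastAtMost])
  then show ?thesis by (cases Q) simp_all
qed

lemma PW:
  assumes c: "c \<in> cpaths n" and v: "valid c" and i1: "1 \<le> i" and i2: "i \<le> n"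
  shows "V n i A c = (\<Sum>j=0..i. if c n = j then V n n A c else 0) +
      (\<Sum>j=0..i. \<Sum>l=i..n-1. if c l = j \<and> c (Suc l) = Suc l then V n l A c else 0)"
proof -
  have s1: "(\<Sum>j=0..i. if c n = j then V n n A c else 0) = (if c n \<le> i then V n n A c else 0)"
    using sum_ind[of "c n" True "V n n A c" i] by simp
  have "(\<Sum>j=0..i. \<Sum>l=i..n-1. if c l = j \<and> c (Suc l) = Suc l then V n l A c else 0) =
      (\<Sum>l=i..n-1. \<Sum>j=0..i. if c l = j \<and> c (Suc l) = Suc l then V n l A c else 0)"
    by (rule sum.swap)
  also have "\<dots> = (\<Sum>l=i..n-1. if c l \<le> i \<and> c (Suc l) = Suc l then V n l A c else 0)"
    by (intro sum.cong refl sum_ind)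
  finally have s2: "(\<Sum>j=0..i. \<Sum>l=i..n-1. if c l = j \<and> c (Suc l) = Suc l then V n l A c else 0) =
      (\<Sum>l=i..n-1. if c l \<le> i \<and> c (Suc l) = Suc l then V n l A c else 0)" .
  show ?thesis
  proof (cases "c n \<le> i")
    case True
    have cn: "c n = c i" by (rule valid_const[OF v i2 order.refl True])
    have z: "(\<Sum>l=i..n-1. if c l \<le> i \<and> c (Suc l) = Suc l then V n l A c else 0) = 0"
    proof (intro sum.neutral ballI)
      fix l assume l: "l \<in> {i..n-1}"
      show "(if c l \<le> i \<and> c (Suc l) = Suc l then V n l A c else 0) = 0"
      proof (cases "c (Suc l) = Suc l")
        case True
        then have "Suc l \<le> c n" using valid_ge[OF v True, of n] l i1 i2 by auto
        then show ?thesis using \<open>c n \<le> i\<close> l by auto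
      qed simp
    qed
    show ?thesis unfolding s1 s2 z using True V_eqk[of c n i n A] cn by simp
  next
    case False
    have "n \<noteq> i" using False cp_le[OF c, of i] by auto
    then have ex: "\<exists>m. i < m \<and> i < c m" using False i2 by (intro exI[of _ n]) auto
    define m1 where "m1 = (LEAST m. i < m \<and> i < c m)"
    have m1: "i < m1" "i < c m1" using LeastI_ex[OF ex] unfolding m1_def by auto
    have m1n: "m1 \<in> {1..n}"
    proof (rule ccontr)
      assume "m1 \<notin> {1..n}"
      then have "c m1 = 0" using c unfolding cpaths_def by auto
      then show False using m1 by simp
    qed
    define l1 where "l1 = m1 - 1"
    have m1l: "m1 = Suc l1" using m1 unfolding l1_def by simp
    have cl1: "c l1 \<le> i"
    proof (cases "l1 = i")
      case True then show ?thesis using cp_le[OF c, of i] by simp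
    next
      case False
      then have lt: "l1 < m1" "i < l1" using m1 m1l by auto
      have "\<not> (i < l1 \<and> i < c l1)" using lt(1) unfolding m1_def by (rule not_less_Least)
      then show ?thesis using \<open>i < l1\<close> by simp
    qed
    have "c m1 = c (m1 - 1) \<or> c m1 = m1" using v m1n unfolding valid_def by blast
    then have e1: "c (Suc l1) = Suc l1" using m1 cl1 m1l unfolding l1_def by auto
    have l1r: "l1 \<in> {i..n-1}" using m1 m1n m1l by auto
    have uniq: "(if c l \<le> i \<and> c (Suc l) = Suc l then V n l A c else 0) = (if l1 = l then V n l1 A c else 0)"
      if l: "l \<in> {i..n-1}" for l
    proof (cases "c l \<le> i \<and> c (Suc l) = Suc l")
      case True
      have "l = l1"
      proof (rule ccontr)
        assume ne: "l \<noteq> l1"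
        show False
        proof (cases "l < l1")
          case True
          then have "Suc l \<le> c l1" using valid_ge[OF v _ _, of l l1] \<open>c l \<le> i \<and> c (Suc l) = Suc l\<close> l1r by auto
          then show False using cl1 l by auto
        next
          case False
          then have "Suc l1 \<le> c l" using valid_ge[OF v e1, of l] ne l by auto
          then show False using True m1 m1l by auto
        qed
      qed
      then show ?thesis using True by simp
    next
      case False
      then show ?thesis using cl1 e1 by auto
    qed
    have "(\<Sum>l=i..n-1. if c l \<le> i \<and> c (Suc l) = Suc l then V n l A c else 0) =
        (\<Sum>l=i..n-1. if l1 = l then V n l1 A c else 0)"
      by (intro sum.cong refl uniq) simp
    also have "\<dots> = V n l1 A c" using l1r by (simp add: sum.delta)
    also have "\<dots> = V n i A c"
      by (rule V_eqk) (rule valid_const[OF v _ _ cl1]; use l1r in auto)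
    finally show ?thesis unfolding s1 s2 using False by simp
  qed
qed

lemma Dec:
  assumes i1: "1 \<le> i" and i2: "i \<le> n" and A: "A \<in> sets borel"
  shows "NN n (\<lambda>_. True) i A = (\<Sum>j=0..i. NN n (\<lambda>c. c n = j) n A) +
     (\<Sum>j=0..i. \<Sum>l=i..n-1. NN n (\<lambda>c. c l = j \<and> c (Suc l) = Suc l) l A)"
proof -
  define f where "f j c = (if c n = j then V n n A c else 0)" for j c
  define g where "g j l c = (if c l = j \<and> c (Suc l) = Suc l then V n l A c else 0)" for j l c
  have r1: "(\<Sum>j=0..i. NN n (\<lambda>c. c n = j) n A) = (\<Sum>c\<in>cpaths n. W n c * (\<Sum>j=0..i. f j c))"
  proof -
    have "(\<Sum>j=0..i. NN n (\<lambda>c. c n = j) n A) = (\<Sum>j=0..i. \<Sum>c\<in>cpaths n. W n c * f j c)"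
      unfolding NN_sum[OF A] f_def ..
    also have "\<dots> = (\<Sum>c\<in>cpaths n. \<Sum>j=0..i. W n c * f j c)" by (rule sum.swap)
    also have "\<dots> = (\<Sum>c\<in>cpaths n. W n c * (\<Sum>j=0..i. f j c))" by (simp only: sum_distrib_left)
    finally show ?thesis .
  qed
  have r2: "(\<Sum>j=0..i. \<Sum>l=i..n-1. NN n (\<lambda>c. c l = j \<and> c (Suc l) = Suc l) l A) =
      (\<Sum>c\<in>cpaths n. W n c * (\<Sum>j=0..i. \<Sum>l=i..n-1. g j l c))"
  proof -
    have "(\<Sum>j=0..i. \<Sum>l=i..n-1. NN n (\<lambda>c. c l = j \<and> c (Suc l) = Suc l) l A) =
        (\<Sum>j=0..i. \<Sum>l=i..n-1. \<Sum>c\<in>cpaths n. W n c * g j l c)"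
      unfolding NN_sum[OF A] g_def ..
    also have "\<dots> = (\<Sum>j=0..i. \<Sum>c\<in>cpaths n. \<Sum>l=i..n-1. W n c * g j l c)"
      by (intro sum.cong refl sum.swap)
    also have "\<dots> = (\<Sum>c\<in>cpaths n. \<Sum>j=0..i. \<Sum>l=i..n-1. W n c * g j l c)" by (rule sum.swap)
    also have "\<dots> = (\<Sum>c\<in>cpaths n. W n c * (\<Sum>j=0..i. \<Sum>l=i..n-1. g j l c))" by (simp only: sum_distrib_left)
    finally show ?thesis .
  qed
  have "NN n (\<lambda>_. True) i A = (\<Sum>c\<in>cpaths n. W n c * ((\<Sum>j=0..i. f j c) + (\<Sum>j=0..i. \<Sum>l=i..n-1. g j l c)))"
    unfolding NN_sum[OF A]
  proof (intro sum.cong refl)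
    fix c assume c: "c \<in> cpaths n"
    show "W n c * (if True then V n i A c else 0) = W n c * ((\<Sum>j=0..i. f j c) + (\<Sum>j=0..i. \<Sum>l=i..n-1. g j l c))"
    proof (cases "W n c = 0")
      case False
      show ?thesis using PW[OF c valid_of_W[OF False] i1 i2, of A] unfolding f_def g_def by simp
    qed simp
  qed
  also have "\<dots> = (\<Sum>c\<in>cpaths n. W n c * (\<Sum>j=0..i. f j c)) + (\<Sum>c\<in>cpaths n. W n c * (\<Sum>j=0..i. \<Sum>l=i..n-1. g j l c))"
    by (simp only: distrib_left sum.distrib)
  finally show ?thesis unfolding r1 r2 .
qed

lemma post_NN:
  assumes e1: "E \<inter> F = {\<omega>. P (fst \<omega>)} \<inter> {\<omega>. Xv k \<omega> \<in> B}"
    and e2: "F = {\<omega>. P' (fst \<omega>)} \<inter> {\<omega>. Xv k' \<omega> \<in> B'}"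
    and B: "B \<in> sets borel" and B': "B' \<in> sets borel"
  shows "post n q J p y m F E = enn2real (NN m P k B) / enn2real (NN m P' k' B')"
proof -
  have "post n q J p y m F E =
     (\<integral>\<omega>. indicator ({\<omega>. P (fst \<omega>)} \<inter> {\<omega>. Xv k \<omega> \<in> B}) \<omega> * lik p y m \<omega> \<partial>cp_joint n q J) /
     (\<integral>\<omega>. indicator ({\<omega>. P' (fst \<omega>)} \<inter> {\<omega>. Xv k' \<omega> \<in> B'}) \<omega> * lik p y m \<omega> \<partial>cp_joint n q J)"
    unfolding post_def e1 by (simp only: e2[symmetric])
  then show ?thesis by (simp only: int_NN[OF B] int_NN[OF B'])
qed

abbreviation "DD \<equiv> NN n (\<lambda>_. True) n UNIV"

lemma lhs_eq:
  assumes A: "A \<in> sets borel"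
  shows "post n q J p y n UNIV {\<omega>. Xv i \<omega> \<in> A} = enn2real (NN n (\<lambda>_. True) i A) / enn2real DD"
  by (rule post_NN[OF _ _ A UNIV_borel]) auto

lemma Hc_eq:
  assumes A: "A \<in> sets borel"
  shows "Hc n q J p y j l A = enn2real (NN l (\<lambda>c. c l = j) l A) / enn2real (NN l (\<lambda>c. c l = j) l UNIV)"
  unfolding Hc_def by (rule post_NN[OF _ _ A UNIV_borel]) (auto simp: Cv_def)

lemma ct_n: "ct n q J p y j n = enn2real (NN n (\<lambda>c. c n = j) n UNIV) / enn2real DD"
  unfolding ct_def by simp (rule post_NN[OF _ _ UNIV_borel UNIV_borel]; auto simp: Cv_def)

lemma ct_l:
  assumes "l < n"
  shows "ct n q J p y j l = enn2real (NN l (\<lambda>c. c l = j \<and> c (Suc l) = Suc l) l UNIV) /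
     enn2real (NN l (\<lambda>c. c (Suc l) = Suc l) l UNIV)"
  unfolding ct_def using assms by simp (rule post_NN[OF _ _ UNIV_borel UNIV_borel]; auto simp: Cv_def)

lemma qt_eq: "qt n q J p y (Suc l) = enn2real (NN n (\<lambda>c. c (Suc l) = Suc l) n UNIV) / enn2real DD"
  unfolding qt_def by (rule post_NN[OF _ _ UNIV_borel UNIV_borel]) (auto simp: Cv_def)

lemma main:
  assumes i1: "0 < i" and i2: "i \<le> n" and A: "A \<in> sets borel"
  shows "post n q J p y n UNIV {\<omega>. Xv i \<omega> \<in> A} =
     (\<Sum>j=0..i. Hc n q J p y j n A * ct n q J p y j n
        + (\<Sum>l=i..n-1. Hc n q J p y j l A * ct n q J p y j l * qt n q J p y (l + 1)))"
proof (cases "DD = top")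
  case True
  then show ?thesis unfolding lhs_eq[OF A] ct_n Suc_eq_plus1[symmetric] qt_eq by simp
next
  case False
  then have Dt: "DD < top" by (simp add: less_top)
  let ?X = "\<lambda>j. NN n (\<lambda>c. c n = j) n A"
  let ?P = "\<lambda>j l. NN n (\<lambda>c. c l = j \<and> c (Suc l) = Suc l) l A"
  have XD: "?X j \<le> DD" for j
    using NN_mono_B[OF A, of n "\<lambda>c. c n = j" n] NN_mono_P[OF _ UNIV_borel, of "\<lambda>c. c n = j" "\<lambda>_. True" n n]
    by (meson order.trans)
  have PD: "?P j l \<le> DD" for j l
  proof -
    have "?P j l \<le> NN n (\<lambda>c. c l = j \<and> c (Suc l) = Suc l) l UNIV" by (rule NN_mono_B[OF A])
    also have "\<dots> \<le> NN n (\<lambda>_. True) l UNIV" by (rule NN_mono_P[OF _ UNIV_borel]) simp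
    also have "\<dots> = DD" by (rule NN_k)
    finally show ?thesis .
  qed
  have Xt: "?X j < top" for j using XD[of j] Dt by (meson le_less_trans)
  have Pt: "?P j l < top" for j l using PD Dt by (meson le_less_trans)
  have "enn2real (NN n (\<lambda>_. True) i A) = (\<Sum>j=0..i. enn2real (?X j)) + (\<Sum>j=0..i. \<Sum>l=i..n-1. enn2real (?P j l))"
  proof -
    have i1': "1 \<le> i" using i1 by simp
    have e1: "enn2real (\<Sum>j=0..i. ?X j) = (\<Sum>j=0..i. enn2real (?X j))"
      using enn2real_sum[of "{0..i}" ?X] Xt by (simp add: o_def)
    have e2: "enn2real (\<Sum>l=i..n-1. ?P j l) = (\<Sum>l=i..n-1. enn2real (?P j l))" for j
      using enn2real_sum[of "{i..n-1}" "?P j"] Pt by (simp add: o_def)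
    have e3: "enn2real (\<Sum>j=0..i. \<Sum>l=i..n-1. ?P j l) = (\<Sum>j=0..i. enn2real (\<Sum>l=i..n-1. ?P j l))"
      using enn2real_sum[of "{0..i}" "\<lambda>j. \<Sum>l=i..n-1. ?P j l"] Pt by (simp add: o_def)
    have e4: "enn2real ((\<Sum>j=0..i. ?X j) + (\<Sum>j=0..i. \<Sum>l=i..n-1. ?P j l)) =
        enn2real (\<Sum>j=0..i. ?X j) + enn2real (\<Sum>j=0..i. \<Sum>l=i..n-1. ?P j l)"
      by (rule enn2real_plus) (simp_all add: Xt Pt)
    show ?thesis unfolding Dec[OF i1' i2 A] e4 e1 e3 e2 ..
  qed
  then have L: "post n q J p y n UNIV {\<omega>. Xv i \<omega> \<in> A} =
      (\<Sum>j=0..i. enn2real (?X j) / enn2real DD + (\<Sum>l=i..n-1. enn2real (?P j l) / enn2real DD))"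
    unfolding lhs_eq[OF A] by (simp add: add_divide_distrib sum_divide_distrib sum.distrib)
  have T1: "enn2real (?X j) / enn2real DD = Hc n q J p y j n A * ct n q J p y j n" for j
    unfolding Hc_eq[OF A] ct_n
  proof (rule K1)
    show "?X j \<le> NN n (\<lambda>c. c n = j) n UNIV" by (rule NN_mono_B[OF A])
    show "NN n (\<lambda>c. c n = j) n UNIV \<le> DD" by (rule NN_mono_P[OF _ UNIV_borel]) simp
  qed (rule Dt)
  have T2: "enn2real (?P j l) / enn2real DD = Hc n q J p y j l A * ct n q J p y j l * qt n q J p y (l + 1)"
    if j: "j \<le> i" and l: "l \<in> {i..n-1}" for j l
  proof -
    have l0: "Suc l \<le> n" and l1: "1 \<le> l" and ln: "l < n" using l i1 i2 by auto
    have jl: "j < Suc l" using j l by auto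
    let ?aA = "NN l (\<lambda>c. c l = j) l A" and ?aU = "NN l (\<lambda>c. c l = j) l UNIV"
    let ?b = "ennreal (1 - q j (Suc l))" and ?s = "NN l (\<lambda>c. c (Suc l) = Suc l) l UNIV"
    have "enn2real (?b * ?aA * Yf l) / enn2real DD =
       enn2real ?aA / enn2real ?aU * (enn2real (?b * ?aU) / enn2real ?s) * (enn2real (?s * Yf l) / enn2real DD)"
    proof (rule K2)
      show "?aA \<le> ?aU" by (rule NN_mono_B[OF A])
      show "?b \<le> 1" using qb[OF jl l0] by (simp add: ennreal_le_1)
      show "?b * ?aU \<le> ?s" unfolding lvl_b[OF l0, symmetric] by (rule NN_mono_P[OF _ UNIV_borel]) simp
      show "?s * Yf l \<le> DD" unfolding lvl_NC[OF l0 l1, symmetric] by (rule NN_mono_P[OF _ UNIV_borel]) simp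
    qed (rule Dt)
    then show ?thesis
      unfolding lvl_piece[OF l0 l1 A] Hc_eq[OF A] ct_l[OF ln] lvl_b[OF l0] Suc_eq_plus1[symmetric] qt_eq lvl_NC[OF l0 l1] .
  qed
  show ?thesis unfolding L
    by (intro sum.cong refl arg_cong2[where f="(+)"] T1 T2) auto
qed

end

theorem mainTheorem10:
  fixes n :: nat and y :: "nat \<Rightarrow> 'y::polish_space" and \<psi> :: "'y measure"
    and J :: "'x::polish_space measure" and q :: "nat \<Rightarrow> nat \<Rightarrow> real"
    and p :: "'x \<Rightarrow> 'y \<Rightarrow> real" and i :: nat and A :: "'x set"
  assumes "n \<ge> 1"
    and "sigma_finite_measure \<psi>" and "sets \<psi> = sets borel"
    and "prob_space J" and "sets J = sets borel"
    and "\<And>j k. j < k \<Longrightarrow> k \<le> n \<Longrightarrow> 0 \<le> q j k \<and> q j k \<le> 1"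
    and "(\<lambda>(x, v). p x v) \<in> borel_measurable (borel \<Otimes>\<^sub>M borel)"
    and "\<And>x v. 0 \<le> p x v"
    and "\<And>x. (\<integral>\<^sup>+ v. ennreal (p x v) \<partial>\<psi>) = 1"
    and "\<And>j k. 0 < j \<Longrightarrow> j \<le> k \<Longrightarrow> k \<le> n \<Longrightarrow>
           (\<integral>\<^sup>+ x. ennreal (\<Prod>l\<in>{j..k}. p x (y l)) \<partial>J) > 0"
    and "0 < i" and "i \<le> n" and "A \<in> sets borel"
  shows "post n q J p y n UNIV {\<omega>. Xv i \<omega> \<in> A} =
     (\<Sum>j=0..i. Hc n q J p y j n A * ct n q J p y j n
        + (\<Sum>l=i..n-1. Hc n q J p y j l A * ct n q J p y j l * qt n q J p y (l + 1)))"
proof -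
  interpret cpm n q J p y
    by (rule cpm.intro) (fact assms(1), fact assms(4), fact assms(5), fact assms(6), fact assms(7), fact assms(8))
  show ?thesis by (rule main) (fact assms(11), fact assms(12), fact assms(13))
qed

end
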